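(* Let $d,n\in\mathbb{N}$, let $\mathcal{P}$ be a unit hypercube partition of $\mathbb{R}^{d}$, and let $X_{1},\ldots,X_{n}\in\mathcal{P}$ be such that $X_i$ and $X_j$ are adjacent for all $i,j\in[n]$. Then there is a point $\vec{p}\in\mathbb{R}^{d}$ such that $\vec{p}\in\overline{X_{i}}$ for all $i\in[n]$.
   Context: A unit hypercube is a set $\vec{a}+[0,1)^d$ with $\vec{a}\in\mathbb{R}^d$; a unit hypercube partition is a partition of $\mathbb{R}^d$ all of whose members are unit hypercubes. $\overline{X}$ denotes closure; $X$ and $Y$ are adjacent if $\overline{X}\cap\overline{Y}\ne\emptyset$. *)

theory Defs
  imports "HOL-Analysis.Analysis"
begin

definition unit_hypercube :: "real^'d \<Rightarrow> (real^'d) set" where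
  "unit_hypercube a = {x. \<forall>i. a $ i \<le> x $ i \<and> x $ i < a $ i + 1}"

definition is_unit_hypercube :: "(real^'d) set \<Rightarrow> bool" where
  "is_unit_hypercube X \<longleftrightarrow> (\<exists>a. X = unit_hypercube a)"

definition unit_hypercube_partition :: "(real^'d) set set \<Rightarrow> bool" where
  "unit_hypercube_partition P \<longleftrightarrow>
     \<Union>P = UNIV \<and>
     (\<forall>X\<in>P. \<forall>Y\<in>P. X \<noteq> Y \<longrightarrow> X \<inter> Y = {}) \<and>
     (\<forall>X\<in>P. is_unit_hypercube X)"

definition adjacent :: "'a::topological_space set \<Rightarrow> 'a set \<Rightarrow> bool" where
  "adjacent X Y \<longleftrightarrow> closure X \<inter> closure Y \<noteq> {}"

end

theory Submission
  imports Defs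
begin

lemma closure_uhc:
  fixes a :: "real^'d"
  shows "closure (unit_hypercube a) = {x. \<forall>k. a$k \<le> x$k \<and> x$k \<le> a$k + 1}"
proof -
  define b :: "real^'d" where "b = (\<chi> k. a$k + 1)"
  have s1: "box a b \<subseteq> unit_hypercube a"
    unfolding mem_box_cart unit_hypercube_def b_def subset_iff
    by (simp add: mem_box_cart) (meson less_imp_le)
  have s2: "unit_hypercube a \<subseteq> cbox a b"
    unfolding unit_hypercube_def b_def subset_iff
    by (simp add: mem_box_cart) (meson less_imp_le)
  have ne: "box a b \<noteq> {}"
    by (auto simp: interval_ne_empty_cart b_def)
  have "closure (box a b) = cbox a b" using closure_box[OF ne] .
  hence "closure (unit_hypercube a) = cbox a b"
    using closure_mono[OF s1] closure_mono[OF s2] closure_closed[OF closed_cbox]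
    by blast
  thus ?thesis by (auto simp: mem_box_cart b_def)
qed

theorem mainTheorem13:
  fixes P :: "(real^'d) set set" and X :: "nat \<Rightarrow> (real^'d) set" and n :: nat
  assumes "unit_hypercube_partition P"
    and "\<forall>i\<in>{1..n}. X i \<in> P"
    and "\<forall>i\<in>{1..n}. \<forall>j\<in>{1..n}. adjacent (X i) (X j)"
  shows "\<exists>p::real^'d. \<forall>i\<in>{1..n}. p \<in> closure (X i)"
proof (cases "n = 0")
  case True thus ?thesis by auto
next
  case False
  have "\<forall>i\<in>{1..n}. \<exists>a. X i = unit_hypercube a"
    using assms(1,2) by (auto simp: unit_hypercube_partition_def is_unit_hypercube_def)
  then obtain a where a: "\<And>i. i \<in> {1..n} \<Longrightarrow> X i = unit_hypercube (a i)" by metis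
  have cl: "\<And>i. i \<in> {1..n} \<Longrightarrow> closure (X i) = {x. \<forall>k. a i$k \<le> x$k \<and> x$k \<le> a i$k + 1}"
    using a closure_uhc by simp
  have le: "a i $ k \<le> a j $ k + 1" if "i \<in> {1..n}" "j \<in> {1..n}" for i j k
  proof -
    have "closure (X i) \<inter> closure (X j) \<noteq> {}" using assms(3) that by (simp add: adjacent_def)
    then obtain y where "y \<in> closure (X i)" "y \<in> closure (X j)" by blast
    hence "y \<in> {x. \<forall>k. a i$k \<le> x$k \<and> x$k \<le> a i$k + 1}" "y \<in> {x. \<forall>k. a j$k \<le> x$k \<and> x$k \<le> a j$k + 1}"
      using cl[OF that(1)] cl[OF that(2)] by auto
    thus ?thesis by (smt (verit) mem_Collect_eq)
  qed
  define p :: "real^'d" where "p = (\<chi> k. Max ((\<lambda>i. a i $ k) ` {1..n}))"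
  have ne: "{1..n} \<noteq> {}" using False by auto
  have "p \<in> closure (X j)" if j: "j \<in> {1..n}" for j
  proof -
    have "a j $ k \<le> p $ k \<and> p $ k \<le> a j $ k + 1" for k
    proof
      show "a j $ k \<le> p $ k" unfolding p_def using j by (simp add: Max_ge)
      have "Max ((\<lambda>i. a i $ k) ` {1..n}) \<le> a j $ k + 1"
        using le[OF _ j, of _ k] ne by (subst Max_le_iff) auto
      thus "p $ k \<le> a j $ k + 1" unfolding p_def by simp
    qed
    thus ?thesis using cl[OF j] by auto
  qed
  thus ?thesis by blast
qed

end
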